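(* Let $Z_1,Z_2$ be independent non-negative random variables and $Z_1',Z_2'$ independent non-negative random variables such that for each of $Z_1,Z_2,Z_1',Z_2'$: its law has a point mass at $0$ and a density on $(0,\infty)$, and its transform $\mathbb E e^{\theta Z}$ is nonzero for all complex $\theta$ with $\Re(\theta)\le0$. If $Z_1-Z_2\stackrel{\rm d}{=} Z_1'-Z_2'$, then $Z_1\stackrel{\rm d}{=}Z_1'$ and $Z_2\stackrel{\rm d}{=}Z_2'$. *)

theory Defs
  imports "HOL-Probability.Probability"
begin

definition atom0_density_law :: "real measure \<Rightarrow> bool" where
  "atom0_density_law \<mu> \<longleftrightarrow>
     emeasure \<mu> {0} > 0 \<and>
     (\<exists>f \<in> borel_measurable borel.
        \<forall>A \<in> sets borel. emeasure \<mu> (A \<inter> {0<..}) = (\<integral>\<^sup>+ x \<in> A \<inter> {0<..}. f x \<partial>lborel))"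

definition transform :: "'a measure \<Rightarrow> ('a \<Rightarrow> real) \<Rightarrow> complex \<Rightarrow> complex" where
  "transform M Z \<theta> = (\<integral> x. exp (\<theta> * complex_of_real (Z x)) \<partial>M)"

definition good_rv :: "'a measure \<Rightarrow> ('a \<Rightarrow> real) \<Rightarrow> bool" where
  "good_rv M Z \<longleftrightarrow>
     Z \<in> borel_measurable M \<and>
     (AE x in M. Z x \<ge> 0) \<and>
     atom0_density_law (distr M borel Z) \<and>
     (\<forall>\<theta>::complex. Re \<theta> \<le> 0 \<longrightarrow> transform M Z \<theta> \<noteq> 0)"

end

theory Submission
  imports Defs "HOL-Complex_Analysis.Complex_Analysis" "HOL-Probability.Levy"
begin

definition EL :: "(real \<Rightarrow> real) \<Rightarrow> complex \<Rightarrow> complex" where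
  "EL g \<theta> = (CLINT x|lborel. complex_of_real (indicator {0..} x * g x) * exp (\<theta> * complex_of_real x))"

definition RLP :: "(real \<Rightarrow> real) \<Rightarrow> bool" where
  "RLP g \<longleftrightarrow> (\<forall>e>0. \<exists>T. \<forall>\<theta>. Re \<theta> \<le> 0 \<longrightarrow> T \<le> \<bar>Im \<theta>\<bar> \<longrightarrow> cmod (EL g \<theta>) \<le> e)"

lemma norm_exp_le1: "Re \<theta> \<le> 0 \<Longrightarrow> 0 \<le> x \<Longrightarrow> cmod (exp (\<theta> * complex_of_real x)) \<le> 1"
  by (simp add: norm_exp_eq_Re mult_nonpos_nonneg)

lemma EL_integrand_bound:
  assumes "Re \<theta> \<le> 0"
  shows "cmod (complex_of_real (indicator {0..} x * g x) * exp (\<theta> * complex_of_real x))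
     \<le> indicator {0..} x * \<bar>g x\<bar>"
proof (cases "0 \<le> x")
  case True
  have "cmod (exp (\<theta> * complex_of_real x)) \<le> 1" using norm_exp_le1[OF assms True] .
  then show ?thesis using True
    by (simp add: norm_mult mult_left_le)
qed simp

lemma EL_integrable:
  assumes "integrable lborel g" "Re \<theta> \<le> 0"
  shows "integrable lborel (\<lambda>x. complex_of_real (indicator {0..} x * g x) * exp (\<theta> * complex_of_real x))"
proof (rule Bochner_Integration.integrable_bound)
  show "integrable lborel (\<lambda>x. indicator {0..} x * \<bar>g x\<bar>)"
    using integrable_mult_indicator[of "{0..}" lborel "\<lambda>x. \<bar>g x\<bar>"] assms(1) by simp
  show "(\<lambda>x. complex_of_real (indicator {0..} x * g x) * exp (\<theta> * complex_of_real x)) \<in> borel_measurable lborel"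
    using assms(1) by measurable
  show "AE x in lborel. norm (complex_of_real (indicator {0..} x * g x) * exp (\<theta> * complex_of_real x))
     \<le> norm (indicator {0..} x * \<bar>g x\<bar>)"
    using EL_integrand_bound[OF assms(2)] by (auto intro!: AE_I2 order_trans[OF _ abs_ge_self])
qed

lemma EL_norm:
  assumes "integrable lborel g" "Re \<theta> \<le> 0"
  shows "cmod (EL g \<theta>) \<le> (\<integral>x. indicator {0..} x * \<bar>g x\<bar> \<partial>lborel)"
  unfolding EL_def
proof (rule Bochner_Integration.integral_norm_bound_integral)
  show "integrable lborel (\<lambda>x. indicator {0..} x * \<bar>g x\<bar>)"
    using integrable_mult_indicator[of "{0..}" lborel "\<lambda>x. \<bar>g x\<bar>"] assms(1) by simp
qed (use EL_integrable[OF assms] EL_integrand_bound[OF assms(2)] in auto)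

lemma EL_diff:
  assumes "integrable lborel g" "integrable lborel h" "Re \<theta> \<le> 0"
  shows "EL g \<theta> - EL h \<theta> = EL (\<lambda>x. g x - h x) \<theta>"
  unfolding EL_def
  by (subst Bochner_Integration.integral_diff[OF EL_integrable[OF assms(1,3)] EL_integrable[OF assms(2,3)], symmetric])
     (simp add: algebra_simps)

lemma EL_add:
  assumes "integrable lborel g" "integrable lborel h" "Re \<theta> \<le> 0"
  shows "EL g \<theta> + EL h \<theta> = EL (\<lambda>x. g x + h x) \<theta>"
  unfolding EL_def
  by (subst Bochner_Integration.integral_add[OF EL_integrable[OF assms(1,3)] EL_integrable[OF assms(2,3)], symmetric])
     (simp add: algebra_simps)

lemma EL_mult: "EL (\<lambda>x. c * g x) \<theta> = complex_of_real c * EL g \<theta>"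
  unfolding EL_def
  by (subst integral_mult_right_zero[symmetric]) (simp add: algebra_simps)

lemma RLP_mult: assumes "RLP g" shows "RLP (\<lambda>x. c * g x)"
  unfolding RLP_def
proof (intro allI impI)
  fix e :: real assume e: "e > 0"
  then have "e / (\<bar>c\<bar> + 1) > 0" by simp
  with assms obtain T where T: "\<And>\<theta>. Re \<theta> \<le> 0 \<Longrightarrow> T \<le> \<bar>Im \<theta>\<bar> \<Longrightarrow> cmod (EL g \<theta>) \<le> e / (\<bar>c\<bar> + 1)"
    unfolding RLP_def by blast
  show "\<exists>T. \<forall>\<theta>. Re \<theta> \<le> 0 \<longrightarrow> T \<le> \<bar>Im \<theta>\<bar> \<longrightarrow> cmod (EL (\<lambda>x. c * g x) \<theta>) \<le> e"
  proof (intro exI allI impI)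
    fix \<theta> assume h: "Re \<theta> \<le> 0" "T \<le> \<bar>Im \<theta>\<bar>"
    have "cmod (EL (\<lambda>x. c * g x) \<theta>) = \<bar>c\<bar> * cmod (EL g \<theta>)"
      by (simp add: EL_mult norm_mult)
    also have "\<dots> \<le> \<bar>c\<bar> * (e / (\<bar>c\<bar> + 1))" using T[OF h] by (intro mult_left_mono) auto
    also have "\<dots> \<le> e" using e by (simp add: field_simps)
    finally show "cmod (EL (\<lambda>x. c * g x) \<theta>) \<le> e" .
  qed
qed

lemma RLP_add:
  assumes "RLP g" "RLP h" "integrable lborel g" "integrable lborel h"
  shows "RLP (\<lambda>x. g x + h x)"
  unfolding RLP_def
proof (intro allI impI)
  fix e :: real assume e: "e > 0"
  then have "e / 2 > 0" by simp
  from assms(1) this obtain T1 where T1: "\<And>\<theta>. Re \<theta> \<le> 0 \<Longrightarrow> T1 \<le> \<bar>Im \<theta>\<bar> \<Longrightarrow> cmod (EL g \<theta>) \<le> e / 2"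
    unfolding RLP_def by blast
  from assms(2) \<open>e/2>0\<close> obtain T2 where T2: "\<And>\<theta>. Re \<theta> \<le> 0 \<Longrightarrow> T2 \<le> \<bar>Im \<theta>\<bar> \<Longrightarrow> cmod (EL h \<theta>) \<le> e / 2"
    unfolding RLP_def by blast
  show "\<exists>T. \<forall>\<theta>. Re \<theta> \<le> 0 \<longrightarrow> T \<le> \<bar>Im \<theta>\<bar> \<longrightarrow> cmod (EL (\<lambda>x. g x + h x) \<theta>) \<le> e"
  proof (intro exI[of _ "max T1 T2"] allI impI)
    fix \<theta> assume h: "Re \<theta> \<le> 0" "max T1 T2 \<le> \<bar>Im \<theta>\<bar>"
    have "cmod (EL (\<lambda>x. g x + h x) \<theta>) = cmod (EL g \<theta> + EL h \<theta>)"
      using EL_add[OF assms(3,4) h(1)] by simp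
    also have "\<dots> \<le> cmod (EL g \<theta>) + cmod (EL h \<theta>)" by (rule norm_triangle_ineq)
    also have "\<dots> \<le> e/2 + e/2" using T1[of \<theta>] T2[of \<theta>] h by (intro add_mono) auto
    finally show "cmod (EL (\<lambda>x. g x + h x) \<theta>) \<le> e" by simp
  qed
qed

lemma RLP_zero: "RLP (\<lambda>x. 0)"
  unfolding RLP_def EL_def by auto

lemma RLP_sum:
  assumes "\<And>i. i \<in> I \<Longrightarrow> RLP (f i)" "\<And>i. i \<in> I \<Longrightarrow> integrable lborel (f i)" "finite I"
  shows "RLP (\<lambda>x. \<Sum>i\<in>I. f i x)"
  using assms(3,1,2)
proof (induction I rule: finite_induct)
  case empty then show ?case by (simp add: RLP_zero)
next
  case (insert a I)
  have "RLP (\<lambda>x. f a x + (\<Sum>i\<in>I. f i x))"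
    using insert by (intro RLP_add) auto
  then show ?case using insert by simp
qed

lemma RLP_lim:
  fixes s :: "nat \<Rightarrow> real \<Rightarrow> real"
  assumes g: "integrable lborel g" and s: "\<And>i. integrable lborel (s i)" "\<And>i. RLP (s i)"
    and lim: "(\<lambda>i. \<integral>x. indicator {0..} x * \<bar>s i x - g x\<bar> \<partial>lborel) \<longlonglongrightarrow> 0"
  shows "RLP g"
  unfolding RLP_def
proof (intro allI impI)
  fix e :: real assume e: "e > 0"
  then have "e / 2 > 0" by simp
  from lim[THEN order_tendstoD(2), OF this] obtain i where
    i: "(\<integral>x. indicator {0..} x * \<bar>s i x - g x\<bar> \<partial>lborel) < e / 2"
    by (auto simp: eventually_sequentially)
  from s(2)[of i] \<open>e/2>0\<close> obtain T where T: "\<And>\<theta>. Re \<theta> \<le> 0 \<Longrightarrow> T \<le> \<bar>Im \<theta>\<bar> \<Longrightarrow> cmod (EL (s i) \<theta>) \<le> e / 2"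
    unfolding RLP_def by blast
  show "\<exists>T. \<forall>\<theta>. Re \<theta> \<le> 0 \<longrightarrow> T \<le> \<bar>Im \<theta>\<bar> \<longrightarrow> cmod (EL g \<theta>) \<le> e"
  proof (intro exI[of _ T] allI impI)
    fix \<theta> assume h: "Re \<theta> \<le> 0" "T \<le> \<bar>Im \<theta>\<bar>"
    have d: "EL (s i) \<theta> - EL g \<theta> = EL (\<lambda>x. s i x - g x) \<theta>"
      using EL_diff[OF s(1)[of i] g h(1)] by simp
    have "EL g \<theta> = EL (s i) \<theta> - EL (\<lambda>x. s i x - g x) \<theta>"
      by (simp add: d[symmetric])
    also have "cmod \<dots> \<le> cmod (EL (s i) \<theta>) + cmod (EL (\<lambda>x. s i x - g x) \<theta>)"
      by (rule norm_triangle_ineq4)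
    also have "\<dots> \<le> e/2 + e/2"
      using T[OF h] EL_norm[of "\<lambda>x. s i x - g x", OF _ h(1)] i s(1) g by (intro add_mono) auto
    finally show "cmod (EL g \<theta>) \<le> e" by simp
  qed
qed

lemma RLP_dom:
  fixes s :: "nat \<Rightarrow> real \<Rightarrow> real"
  assumes g: "integrable lborel g" and s: "\<And>i. integrable lborel (s i)" "\<And>i. RLP (s i)"
    and w: "integrable lborel w"
    and conv: "\<And>x. 0 \<le> x \<Longrightarrow> (\<lambda>i. s i x) \<longlonglongrightarrow> g x"
    and bnd: "\<And>i x. 0 \<le> x \<Longrightarrow> \<bar>s i x - g x\<bar> \<le> w x"
  shows "RLP g"
proof (rule RLP_lim[OF g s])
  have "(\<lambda>i. \<integral>x. indicator {0..} x * \<bar>s i x - g x\<bar> \<partial>lborel) \<longlonglongrightarrow> (\<integral>x. 0 \<partial>(lborel::real measure))"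
  proof (rule integral_dominated_convergence[where w="\<lambda>x. indicator {0..} x * w x"
      and s="\<lambda>i x. indicator {0..} x * \<bar>s i x - g x\<bar>" and f="\<lambda>x. 0"])
    show "integrable lborel (\<lambda>x. indicator {0..} x * w x)"
      using integrable_mult_indicator[of "{0..}" lborel w] w by simp
    show "AE x in lborel. (\<lambda>i. indicator {0..} x * \<bar>s i x - g x\<bar>) \<longlonglongrightarrow> 0"
    proof (rule AE_I2)
      fix x :: real
      show "(\<lambda>i. indicator {0..} x * \<bar>s i x - g x\<bar>) \<longlonglongrightarrow> 0"
      proof (cases "0 \<le> x")
        case True
        have "(\<lambda>i. s i x - g x) \<longlonglongrightarrow> 0"
          using tendsto_diff[OF conv[OF True] tendsto_const[of "g x"]] by simp
        then have "(\<lambda>i. \<bar>s i x - g x\<bar>) \<longlonglongrightarrow> 0" by (rule tendsto_rabs_zero)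
        then show ?thesis using True by simp
      qed simp
    qed
    show "AE x in lborel. norm (indicator {0..} x * \<bar>s i x - g x\<bar>) \<le> indicator {0..} x * w x" for i
      using bnd by (intro AE_I2) (auto simp: indicator_def)
  qed (use s(1) g in auto)
  then show "(\<lambda>i. \<integral>x. indicator {0..} x * \<bar>s i x - g x\<bar> \<partial>lborel) \<longlonglongrightarrow> 0" by simp
qed


lemma EL_interval:
  assumes "a \<le> d" "0 \<le> a" "\<theta> \<noteq> 0"
  shows "(CLINT x|lborel. complex_of_real (indicator {a..d} x) * exp (\<theta> * complex_of_real x))
     = (exp (\<theta> * d) - exp (\<theta> * a)) / \<theta>"
proof -
  have "(CLINT x|lborel. complex_of_real (indicator {a..d} x) * exp (\<theta> * complex_of_real x))
      = (CLBINT x:{a..d}. exp (\<theta> * complex_of_real x))"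
    unfolding set_lebesgue_integral_def by (intro Bochner_Integration.integral_cong) (auto simp: scaleR_conv_of_real)
  also have "\<dots> = (CLBINT x=a..d. exp (\<theta> * complex_of_real x))"
    using assms by (simp add: interval_integral_Icc)
  also have "\<dots> = exp (\<theta> * d) / \<theta> - exp (\<theta> * a) / \<theta>"
  proof (rule interval_integral_FTC_finite)
    show "continuous_on {min a d..max a d} (\<lambda>x. exp (\<theta> * complex_of_real x))"
      by (intro continuous_intros)
    fix x :: real
    have "((\<lambda>z. exp (\<theta> * z) / \<theta>) has_field_derivative exp (\<theta> * complex_of_real x)) (at (complex_of_real x))"
      using assms(3) by (auto intro!: derivative_eq_intros)
    from has_vector_derivative_real_field[OF this]
    show "((\<lambda>x. exp (\<theta> * complex_of_real x) / \<theta>) has_vector_derivative exp (\<theta> * complex_of_real x))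
       (at x within {min a d..max a d})" .
  qed
  finally show ?thesis by (simp add: diff_divide_distrib)
qed

lemma RLP_interval: "RLP (indicator {c..d})"
  unfolding RLP_def
proof (intro allI impI)
  fix e :: real assume e: "e > 0"
  show "\<exists>T. \<forall>\<theta>. Re \<theta> \<le> 0 \<longrightarrow> T \<le> \<bar>Im \<theta>\<bar> \<longrightarrow> cmod (EL (indicator {c..d}) \<theta>) \<le> e"
  proof (intro exI[of _ "2 / e"] allI impI)
    fix \<theta> assume h: "Re \<theta> \<le> 0" "2 / e \<le> \<bar>Im \<theta>\<bar>"
    have pos: "0 < \<bar>Im \<theta>\<bar>" using h(2) e by (smt (verit) divide_pos_pos)
    then have "\<theta> \<noteq> 0" by auto
    have le: "\<bar>Im \<theta>\<bar> \<le> cmod \<theta>" by (rule abs_Im_le_cmod)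
    define a where "a = max 0 c"
    have ind: "indicator {0..} x * indicator {c..d} x = (indicator {a..d} x :: real)" for x :: real
      by (auto simp: indicator_def a_def)
    have EL_eq: "EL (indicator {c..d}) \<theta> =
      (CLINT x|lborel. complex_of_real (indicator {a..d} x) * exp (\<theta> * complex_of_real x))"
      unfolding EL_def by (simp only: ind)
    show "cmod (EL (indicator {c..d}) \<theta>) \<le> e"
    proof (cases "a \<le> d")
      case False
      then have "{a..d} = {}" by auto
      then show ?thesis using EL_eq e by simp
    next
      case True
      have a0: "0 \<le> a" by (simp add: a_def)
      have "cmod (EL (indicator {c..d}) \<theta>) = cmod (exp (\<theta> * d) - exp (\<theta> * a)) / cmod \<theta>"
        using EL_interval[OF True a0 \<open>\<theta> \<noteq> 0\<close>] EL_eq by (simp add: norm_divide)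
      also have "\<dots> \<le> 2 / cmod \<theta>"
      proof (intro divide_right_mono)
        have "cmod (exp (\<theta> * d)) \<le> 1" "cmod (exp (\<theta> * a)) \<le> 1"
          using norm_exp_le1[OF h(1)] a0 True by auto
        then show "cmod (exp (\<theta> * d) - exp (\<theta> * a)) \<le> 2"
          using norm_triangle_ineq4[of "exp (\<theta> * d)" "exp (\<theta> * a)"] by linarith
      qed simp
      also have "\<dots> \<le> 2 / \<bar>Im \<theta>\<bar>" by (intro divide_left_mono mult_pos_pos) (use pos le in auto)
      also have "\<dots> \<le> e" using h(2) e pos by (simp add: field_simps)
      finally show ?thesis .
    qed
  qed
qed

lemma ind_diff_bound: "A \<subseteq> W \<Longrightarrow> B \<subseteq> W \<Longrightarrow> \<bar>indicator A x - indicator B x\<bar> \<le> (indicator W x :: real)"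
  by (auto simp: indicator_def)

definition PS :: "real set \<Rightarrow> bool" where
  "PS A \<longleftrightarrow> (\<forall>n::nat. RLP (indicator (A \<inter> {0..real n})))"

lemma integrable_ind_W:
  assumes "A \<in> sets borel"
  shows "integrable lborel (indicator (A \<inter> {0..real n}) :: real \<Rightarrow> real)"
proof (rule integrable_real_indicator)
  show "A \<inter> {0..real n} \<in> sets lborel" using assms by auto
  have "emeasure lborel (A \<inter> {0..real n}) \<le> emeasure lborel {0..real n}"
    by (intro emeasure_mono) auto
  also have "\<dots> < \<infinity>" by simp
  finally show "emeasure lborel (A \<inter> {0..real n}) < \<infinity>" .
qed

lemma PS_all:
  assumes "A \<in> sets borel"
  shows "PS A"
  using assms
proof (induction rule: borel_set_induct)
  case empty
  have "indicator ({} \<inter> {0..real n}) = (\<lambda>x::real. 0::real)" for n by (auto simp: fun_eq_iff)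
  then show ?case unfolding PS_def using RLP_zero by simp
next
  case (interval a b)
  have "{a..b} \<inter> {0..real n} = {max a 0..min b (real n)}" for n by auto
  then show ?case unfolding PS_def using RLP_interval by simp
next
  case (compl A)
  show ?case unfolding PS_def
  proof
    fix n :: nat
    have "RLP (\<lambda>x. indicator {0..real n} x + (-1) * indicator (A \<inter> {0..real n}) x)"
      using compl.IH RLP_interval[of 0 "real n"] integrable_ind_W[OF compl.hyps, of n]
        integrable_ind_W[of UNIV n]
      by (intro RLP_add RLP_mult) (auto simp: PS_def)
    moreover have "indicator {0..real n} x + (-1) * indicator (A \<inter> {0..real n}) x
        = (indicator (- A \<inter> {0..real n}) x :: real)" for x
      by (auto simp: indicator_def)
    ultimately show "RLP (indicator (- A \<inter> {0..real n}))" by simp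
  qed
next
  case (union f)
  show ?case unfolding PS_def
  proof
    fix n :: nat
    define W where "W = {0..real n}"
    define g where "g = (indicator ((\<Union>i. f i) \<inter> W) :: real \<Rightarrow> real)"
    define s where "s = (\<lambda>k::nat. (indicator (\<Union>i<k. f i \<inter> W) :: real \<Rightarrow> real))"
    have fW: "f i \<inter> W \<in> sets borel" for i using union.hyps(2) by (auto simp: W_def)
    have s_sum: "s k x = (\<Sum>i<k. indicator (f i \<inter> W) x)" for k x
    proof -
      have "disjoint_family_on (\<lambda>i. f i \<inter> W) {..<k}"
        using union.hyps(1) by (auto simp: disjoint_family_on_def)
      then show ?thesis unfolding s_def
        using indicator_UN_disjoint[of "{..<k}" "\<lambda>i. f i \<inter> W" x] by simp
    qed
    have int_s: "integrable lborel (s k)" for k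
    proof -
      have "(\<Union>i<k. f i \<inter> W) = (\<Union>i<k. f i) \<inter> W" by auto
      moreover have "(\<Union>i<k. f i) \<in> sets borel" using union.hyps(2) by auto
      ultimately show ?thesis unfolding s_def W_def using integrable_ind_W by metis
    qed
    have int_g: "integrable lborel g"
      unfolding g_def W_def using union.hyps(2) by (intro integrable_ind_W) auto
    have RLP_s: "RLP (s k)" for k
    proof -
      have "RLP (\<lambda>x. \<Sum>i<k. indicator (f i \<inter> W) x)"
        using union.IH integrable_ind_W[OF union.hyps(2)] by (intro RLP_sum) (auto simp: PS_def W_def)
      moreover have "s k = (\<lambda>x. \<Sum>i<k. indicator (f i \<inter> W) x)" by (simp add: fun_eq_iff s_sum)
      ultimately show ?thesis by simp
    qed
    have "RLP g"
    proof (rule RLP_dom[OF int_g int_s RLP_s, where w="indicator W"])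
      show "integrable lborel (indicator W :: real \<Rightarrow> real)"
        unfolding W_def using integrable_ind_W[of UNIV n] by simp
      fix x :: real
      have eq: "(\<Union>i. f i \<inter> W) = (\<Union>i. f i) \<inter> W" by blast
      show "(\<lambda>k. s k x) \<longlonglongrightarrow> g x"
        using LIMSEQ_indicator_UN[of "\<lambda>i. f i \<inter> W" x] unfolding s_def g_def eq .
      show "\<bar>s k x - g x\<bar> \<le> indicator W x" for k
        unfolding s_def g_def by (rule ind_diff_bound) blast+
    qed
    then show "RLP (indicator (\<Union> (range f) \<inter> {0..real n}))" unfolding g_def W_def by simp
  qed
qed

theorem RL:
  fixes g :: "real \<Rightarrow> real"
  assumes "integrable lborel g"
  shows "RLP g"
  using assms
proof (induction rule: integrable_induct)
  case (base A c)
  have int_A: "integrable lborel (indicator A :: real \<Rightarrow> real)"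
    using base by auto
  have "RLP (indicator A)"
  proof (rule RLP_dom[OF int_A, where s="\<lambda>n. indicator (A \<inter> {0..real n})" and w="indicator A"])
    have "A \<in> sets borel" using base by simp
    then show "integrable lborel (indicator (A \<inter> {0..real n}) :: real \<Rightarrow> real)" for n
      by (rule integrable_ind_W)
    show "RLP (indicator (A \<inter> {0..real n}))" for n
      using PS_all[OF \<open>A \<in> sets borel\<close>] by (simp add: PS_def)
    show "integrable lborel (indicator A :: real \<Rightarrow> real)" by (rule int_A)
    fix x :: real assume x: "0 \<le> x"
    show "(\<lambda>n. indicator (A \<inter> {0..real n}) x :: real) \<longlonglongrightarrow> indicator A x"
    proof (rule tendsto_eventually)
      obtain N :: nat where "x \<le> real N" using real_arch_simple by blast
      then show "\<forall>\<^sub>F n in sequentially. (indicator (A \<inter> {0..real n}) x :: real) = indicator A x"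
        using x by (auto simp: eventually_sequentially indicator_def intro!: exI[of _ N])
    qed
    show "\<bar>indicator (A \<inter> {0..real n}) x - indicator A x\<bar> \<le> (indicator A x :: real)" for n
      by (auto simp: indicator_def)
  qed
  then have "RLP (\<lambda>x. c * indicator A x)" by (rule RLP_mult)
  then show ?case by (simp add: mult.commute)
next
  case (add f g)
  then show ?case by (intro RLP_add) auto
next
  case (lim f s)
  show ?case
  proof (rule RLP_dom[where s=s and g=f and w="\<lambda>x. 3 * \<bar>f x\<bar>"])
    show "integrable lborel (\<lambda>x. 3 * \<bar>f x\<bar>)" "integrable lborel f"
      "\<And>i. integrable lborel (s i)" "\<And>i. RLP (s i)" using lim by auto
    fix x :: real
    show "(\<lambda>i. s i x) \<longlonglongrightarrow> f x" using lim by simp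
    have b: "\<bar>s i x\<bar> \<le> 2 * \<bar>f x\<bar>" for i using lim by simp
    show "\<bar>s i x - f x\<bar> \<le> 3 * \<bar>f x\<bar>" for i
      using b[of i] abs_triangle_ineq4[of "s i x" "f x"] by linarith
  qed
qed


definition Lap :: "real measure \<Rightarrow> complex \<Rightarrow> complex" where
  "Lap \<mu> \<theta> = (CLINT x|\<mu>. exp (\<theta> * complex_of_real x))"

context real_distribution
begin

lemma norm_integral_le_AE:
  fixes f :: "real \<Rightarrow> 'b::{banach,second_countable_topology}"
  assumes "f \<in> borel_measurable M" "AE x in M. norm (f x) \<le> C"
  shows "norm (integral\<^sup>L M f) \<le> C"
proof -
  have int: "integrable M f" using integrable_const_bound[OF assms(2,1)] .
  have "norm (integral\<^sup>L M f) \<le> (\<integral>x. norm (f x) \<partial>M)" by (rule integral_norm_bound)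
  also have "\<dots> \<le> (\<integral>x. C \<partial>M)"
    using int assms(2) by (intro integral_mono_AE) auto
  also have "\<dots> = C" by (simp del: space_eq_univ add: prob_space)
  finally show ?thesis .
qed

context
  assumes nonneg: "AE x in M. 0 \<le> x"
begin

lemma Lap_bound_AE: "Re \<theta> \<le> 0 \<Longrightarrow> AE x in M. cmod (exp (\<theta> * complex_of_real x)) \<le> 1"
  using nonneg by eventually_elim (rule norm_exp_le1)

lemma Lap_integrable: "Re \<theta> \<le> 0 \<Longrightarrow> integrable M (\<lambda>x. exp (\<theta> * complex_of_real x))"
  by (rule integrable_const_bound[OF Lap_bound_AE]) auto

lemma Lap_norm_le1: "Re \<theta> \<le> 0 \<Longrightarrow> cmod (Lap M \<theta>) \<le> 1"
  unfolding Lap_def by (rule norm_integral_le_AE[OF _ Lap_bound_AE]) auto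

lemma Lap_cont: "continuous_on {\<theta>. Re \<theta> \<le> 0} (Lap M)"
proof (rule continuous_on_sequentiallyI)
  fix u :: "nat \<Rightarrow> complex" and a
  assume u: "\<forall>n. u n \<in> {\<theta>. Re \<theta> \<le> 0}" "a \<in> {\<theta>. Re \<theta> \<le> 0}" "u \<longlonglongrightarrow> a"
  show "(\<lambda>n. Lap M (u n)) \<longlonglongrightarrow> Lap M a"
    unfolding Lap_def
  proof (rule integral_dominated_convergence[where w="\<lambda>_. 1"])
    show "AE x in M. (\<lambda>n. exp (u n * complex_of_real x)) \<longlonglongrightarrow> exp (a * complex_of_real x)"
      using u(3) by (intro AE_I2 tendsto_intros) auto
    show "AE x in M. norm (exp (u n * complex_of_real x)) \<le> 1" for n
      using Lap_bound_AE[of "u n"] u(1) by auto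
  qed auto
qed

lemma Lap_zero: "Lap M 0 = 1"
  unfolding Lap_def by (simp del: space_eq_univ add: prob_space)

lemma sq_exp_bound:
  fixes d x :: real
  assumes "0 < d" "0 \<le> x"
  shows "x\<^sup>2 * exp (- d * x) \<le> 2 / d\<^sup>2"
proof -
  have "1 + d * x + (d * x)\<^sup>2 / 2 \<le> exp (d * x)"
    using assms by (intro exp_lower_Taylor_quadratic) auto
  then have "(d * x)\<^sup>2 / 2 \<le> exp (d * x)" using assms by (smt (verit) mult_nonneg_nonneg)
  then have "d\<^sup>2 * x\<^sup>2 \<le> 2 * exp (d * x)" by (simp add: power_mult_distrib)
  then have "x\<^sup>2 \<le> 2 * exp (d * x) / d\<^sup>2" using assms by (simp add: field_simps)
  then have "x\<^sup>2 * exp (- d * x) \<le> 2 * exp (d * x) / d\<^sup>2 * exp (- d * x)"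
    by (intro mult_right_mono) auto
  also have "\<dots> = 2 / d\<^sup>2" by (simp add: exp_minus field_simps)
  finally show ?thesis .
qed

lemma lin_exp_bound:
  fixes d x :: real
  assumes "0 < d" "0 \<le> x"
  shows "x * exp (- d * x) \<le> 1 / d"
proof -
  have "d * x \<le> exp (d * x)" using exp_ge_add_one_self[of "d * x"] by linarith
  then have "x \<le> exp (d * x) / d" using assms by (simp add: field_simps)
  then have "x * exp (- d * x) \<le> exp (d * x) / d * exp (- d * x)"
    by (intro mult_right_mono) auto
  also have "\<dots> = 1 / d" by (simp add: exp_minus field_simps)
  finally show ?thesis .
qed

lemma Lap_deriv:
  assumes "Re \<theta>0 < 0"
  shows "(Lap M has_field_derivative (CLINT x|M. complex_of_real x * exp (\<theta>0 * complex_of_real x))) (at \<theta>0)"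
proof -
  define d where "d = - Re \<theta>0 / 2"
  have d: "0 < d" using assms by (simp add: d_def)
  define D where "D = (CLINT x|M. complex_of_real x * exp (\<theta>0 * complex_of_real x))"
  have intD: "integrable M (\<lambda>x. complex_of_real x * exp (\<theta>0 * complex_of_real x))"
  proof (rule integrable_const_bound[where B="1/(2*d)"])
    show "AE x in M. norm (complex_of_real x * exp (\<theta>0 * complex_of_real x)) \<le> 1 / (2 * d)"
      using nonneg
    proof eventually_elim
      case (elim x)
      have "norm (complex_of_real x * exp (\<theta>0 * complex_of_real x)) = x * exp (- (2 * d) * x)"
        using elim by (simp add: norm_mult norm_exp_eq_Re d_def)
      also have "\<dots> \<le> 1 / (2 * d)" using d elim by (intro lin_exp_bound) auto
      finally show ?case .
    qed
  qed auto
  define C where "C = 2 / d\<^sup>2"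
  have key: "cmod ((Lap M y - Lap M \<theta>0) / (y - \<theta>0) - D) \<le> C * cmod (y - \<theta>0)"
    if y: "y \<noteq> \<theta>0" "cmod (y - \<theta>0) < d" for y
  proof -
    define h where "h = y - \<theta>0"
    have h0: "h \<noteq> 0" using y by (simp add: h_def)
    have hd: "cmod h < d" using y by (simp add: h_def)
    have "\<bar>Re h\<bar> \<le> cmod h" by (rule abs_Re_le_cmod)
    then have Rey: "Re y \<le> 0" using hd d by (simp add: h_def d_def)
    have Re0: "Re \<theta>0 \<le> 0" using assms by simp
    have "(Lap M y - Lap M \<theta>0) / h - D =
       (CLINT x|M. (exp (y * complex_of_real x) - exp (\<theta>0 * complex_of_real x)) / h
          - complex_of_real x * exp (\<theta>0 * complex_of_real x))"
      unfolding Lap_def D_def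
      by (simp add: Bochner_Integration.integral_diff[OF Lap_integrable[OF Rey] Lap_integrable[OF Re0]]
          Bochner_Integration.integral_diff[OF _ intD] integral_divide_zero
          Lap_integrable[OF Rey] Lap_integrable[OF Re0])
    also have "cmod \<dots> \<le> C * cmod h"
    proof (rule norm_integral_le_AE)
      show "AE x in M. cmod ((exp (y * complex_of_real x) - exp (\<theta>0 * complex_of_real x)) / h -
          complex_of_real x * exp (\<theta>0 * complex_of_real x)) \<le> C * cmod h"
        using nonneg
      proof eventually_elim
        case (elim x)
        have yx: "y * complex_of_real x = \<theta>0 * complex_of_real x + h * complex_of_real x"
          by (simp add: h_def algebra_simps)
        have "(exp (y * complex_of_real x) - exp (\<theta>0 * complex_of_real x)) / h -
            complex_of_real x * exp (\<theta>0 * complex_of_real x)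
          = exp (\<theta>0 * complex_of_real x) * ((exp (h * complex_of_real x) - 1 - h * complex_of_real x) / h)"
          using h0 by (simp add: yx exp_add field_simps)
        also have "cmod \<dots> = exp (Re \<theta>0 * x) * (cmod (exp (h * complex_of_real x) - 1 - h * complex_of_real x) / cmod h)"
          by (simp add: norm_mult norm_divide norm_exp_eq_Re)
        also have "\<dots> \<le> exp (Re \<theta>0 * x) * ((exp (cmod h * x) * (cmod h * x)\<^sup>2) / cmod h)"
        proof (intro mult_left_mono divide_right_mono)
          have "cmod (exp (h * complex_of_real x) - (\<Sum>i\<le>1. (h * complex_of_real x) ^ i / fact i))
              \<le> exp (cmod (h * complex_of_real x)) * (cmod (h * complex_of_real x) ^ Suc 1) / fact 1"
            by (rule Taylor_exp_field)
          then show "cmod (exp (h * complex_of_real x) - 1 - h * complex_of_real x) \<le> exp (cmod h * x) * (cmod h * x)\<^sup>2"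
            using elim by (simp add: norm_mult power2_eq_square algebra_simps)
        qed auto
        also have "\<dots> = cmod h * (x\<^sup>2 * exp ((Re \<theta>0 + cmod h) * x))"
          using h0 by (simp add: power2_eq_square field_simps exp_add[symmetric])
        also have "\<dots> \<le> cmod h * (x\<^sup>2 * exp (- d * x))"
        proof -
          have "(Re \<theta>0 + cmod h) * x \<le> - d * x" using hd elim by (intro mult_right_mono) (auto simp: d_def)
          then show ?thesis by (intro mult_left_mono) auto
        qed
        also have "\<dots> \<le> cmod h * C"
          unfolding C_def using d elim by (intro mult_left_mono sq_exp_bound) auto
        finally show ?case by (simp add: mult.commute)
      qed
    qed auto
    finally show ?thesis by (simp add: h_def)
  qed
  have "((\<lambda>y. (Lap M y - Lap M \<theta>0) / (y - \<theta>0) - D) \<longlongrightarrow> 0) (at \<theta>0)"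
  proof (rule Lim_null_comparison)
    show "\<forall>\<^sub>F y in at \<theta>0. norm ((Lap M y - Lap M \<theta>0) / (y - \<theta>0) - D) \<le> C * cmod (y - \<theta>0)"
      unfolding eventually_at using d key by (intro exI[of _ d]) (auto simp: dist_norm)
    have "((\<lambda>y. C * cmod (y - \<theta>0)) \<longlongrightarrow> C * cmod (\<theta>0 - \<theta>0)) (at \<theta>0)"
      by (intro tendsto_intros)
    then show "((\<lambda>y. C * cmod (y - \<theta>0)) \<longlongrightarrow> 0) (at \<theta>0)" by simp
  qed
  then have "((\<lambda>y. (Lap M y - Lap M \<theta>0) / (y - \<theta>0)) \<longlongrightarrow> D) (at \<theta>0)"
    by (simp add: LIM_zero_iff)
  then show ?thesis unfolding D_def[symmetric]
    by (simp add: has_field_derivative_iff)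
qed

lemma Lap_holo: "Lap M holomorphic_on {\<theta>. Re \<theta> < 0}"
  unfolding holomorphic_on_def field_differentiable_def
  by (metis Lap_deriv has_field_derivative_at_within mem_Collect_eq)

end
end

context real_distribution
begin

context
  assumes nonneg: "AE x in M. 0 \<le> x"
    and atom: "atom0_density_law M"
begin

lemma decomp:
  obtains p g where "0 < p" "integrable lborel g"
    "\<And>\<theta>. Re \<theta> \<le> 0 \<Longrightarrow> Lap M \<theta> - complex_of_real p
        = (CLINT x|M. complex_of_real (indicator {0<..} x) * exp (\<theta> * complex_of_real x))"
    "\<And>\<theta>. Re \<theta> \<le> 0 \<Longrightarrow> Lap M \<theta> - complex_of_real p = EL g \<theta>"
proof -
  from atom obtain f where p0: "emeasure M {0} > 0" and fm: "f \<in> borel_measurable borel"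
    and fd: "\<And>A. A \<in> sets borel \<Longrightarrow> emeasure M (A \<inter> {0<..}) = (\<integral>\<^sup>+ x \<in> A \<inter> {0<..}. f x \<partial>lborel)"
    unfolding atom0_density_law_def by blast
  define p where "p = measure M {0}"
  have p: "0 < p" using p0 by (simp add: p_def emeasure_eq_measure)
  define g where "g x = enn2real (f x * indicator {0<..} x)" for x
  have fm' [measurable]: "f \<in> borel_measurable lborel" using fm by simp
  have gm [measurable]: "g \<in> borel_measurable lborel" unfolding g_def by measurable
  have fin: "(\<integral>\<^sup>+ x. f x * indicator {0<..} x \<partial>lborel) < \<infinity>"
  proof -
    have "(\<integral>\<^sup>+ x. f x * indicator {0<..} x \<partial>lborel) = emeasure M (UNIV \<inter> {0<..})"
      using fd[of UNIV] by simp
    also have "\<dots> < \<infinity>" by (simp add: emeasure_eq_measure)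
    finally show ?thesis .
  qed
  have AEfin: "AE x in lborel. f x * indicator {0<..} x \<noteq> \<infinity>"
    using fin by (intro nn_integral_PInf_AE) auto
  have AEg: "AE x in lborel. ennreal (g x) = f x * indicator {0<..} x"
    using AEfin by eventually_elim (simp add: g_def ennreal_enn2real_if)
  have g0: "g x = 0" if "x \<le> 0" for x using that by (simp add: g_def)
  have gnn: "0 \<le> g x" for x by (simp add: g_def)
  have intg: "integrable lborel g"
    unfolding integrable_iff_bounded
  proof
    have "(\<integral>\<^sup>+ x. ennreal (norm (g x)) \<partial>lborel) = (\<integral>\<^sup>+ x. f x * indicator {0<..} x \<partial>lborel)"
      using AEg gnn by (intro nn_integral_cong_AE) auto
    then show "(\<integral>\<^sup>+ x. ennreal (norm (g x)) \<partial>lborel) < \<infinity>" using fin by simp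
  qed simp
  have dens_eq: "density M (\<lambda>x. ennreal (indicator {0<..} x)) = density lborel (\<lambda>x. ennreal (g x))"
  proof (rule measure_eqI)
    show "sets (density M (\<lambda>x. ennreal (indicator {0<..} x))) = sets (density lborel (\<lambda>x. ennreal (g x)))"
      by simp
    fix A assume "A \<in> sets (density M (\<lambda>x. ennreal (indicator {0<..} x)))"
    then have A [measurable]: "A \<in> sets borel" by simp
    have "emeasure (density M (\<lambda>x. ennreal (indicator {0<..} x))) A
        = (\<integral>\<^sup>+ x. ennreal (indicator {0<..} x) * indicator A x \<partial>M)"
      by (rule emeasure_density) auto
    also have "\<dots> = (\<integral>\<^sup>+ x. indicator (A \<inter> {0<..}) x \<partial>M)"
      by (rule nn_integral_cong) (auto split: split_indicator)
    also have "\<dots> = emeasure M (A \<inter> {0<..})" by (intro nn_integral_indicator) simp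
    also have "\<dots> = (\<integral>\<^sup>+ x. f x * indicator (A \<inter> {0<..}) x \<partial>lborel)" using fd[OF A] by simp
    also have "\<dots> = (\<integral>\<^sup>+ x. ennreal (g x) * indicator A x \<partial>lborel)"
      using AEg by (intro nn_integral_cong_AE) (auto simp: indicator_def)
    also have "\<dots> = emeasure (density lborel (\<lambda>x. ennreal (g x))) A"
      by (subst emeasure_density) auto
    finally show "emeasure (density M (\<lambda>x. ennreal (indicator {0<..} x))) A
        = emeasure (density lborel (\<lambda>x. ennreal (g x))) A" .
  qed
  have D1: "Lap M \<theta> - complex_of_real p
        = (CLINT x|M. complex_of_real (indicator {0<..} x) * exp (\<theta> * complex_of_real x))"
    if th: "Re \<theta> \<le> 0" for \<theta>
  proof -
    have int1: "integrable M (\<lambda>x. complex_of_real (indicator {0} x))"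
      by (intro integrable_const_bound[where B=1]) (auto simp: indicator_def)
    have int2: "integrable M (\<lambda>x. complex_of_real (indicator {0<..} x) * exp (\<theta> * complex_of_real x))"
    proof (rule integrable_const_bound[where B=1])
      show "AE x in M. norm (complex_of_real (indicator {0<..} x) * exp (\<theta> * complex_of_real x)) \<le> 1"
        using Lap_bound_AE[OF nonneg th] by eventually_elim (auto simp: indicator_def norm_mult)
    qed auto
    have "Lap M \<theta> = (CLINT x|M. complex_of_real (indicator {0} x)
         + complex_of_real (indicator {0<..} x) * exp (\<theta> * complex_of_real x))"
      unfolding Lap_def using nonneg
      by (intro integral_cong_AE) (auto elim!: eventually_mono simp: indicator_def)
    also have "\<dots> = (CLINT x|M. complex_of_real (indicator {0} x))
         + (CLINT x|M. complex_of_real (indicator {0<..} x) * exp (\<theta> * complex_of_real x))"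
      by (rule Bochner_Integration.integral_add[OF int1 int2])
    also have "(CLINT x|M. complex_of_real (indicator {0} x)) = complex_of_real p"
      by (simp add: p_def)
    finally show ?thesis by simp
  qed
  have D2: "Lap M \<theta> - complex_of_real p = EL g \<theta>" if th: "Re \<theta> \<le> 0" for \<theta>
  proof -
    have "(CLINT x|M. complex_of_real (indicator {0<..} x) * exp (\<theta> * complex_of_real x))
        = (CLINT x|M. indicator {0<..} x *\<^sub>R exp (\<theta> * complex_of_real x))"
      by (simp add: scaleR_conv_of_real)
    also have "\<dots> = (CLINT x|density M (\<lambda>x. ennreal (indicator {0<..} x)). exp (\<theta> * complex_of_real x))"
      by (subst integral_density) auto
    also have "\<dots> = (CLINT x|density lborel (\<lambda>x. ennreal (g x)). exp (\<theta> * complex_of_real x))"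
      by (simp only: dens_eq)
    also have "\<dots> = (CLINT x|lborel. g x *\<^sub>R exp (\<theta> * complex_of_real x))"
      by (subst integral_density) (auto simp: gnn)
    also have "\<dots> = EL g \<theta>"
      unfolding EL_def
      by (intro Bochner_Integration.integral_cong) (auto simp: scaleR_conv_of_real indicator_def g0)
    finally show ?thesis using D1[OF th] by simp
  qed
  show thesis by (rule that[OF p intg D1 D2])
qed

lemma Lap_lower_bound:
  assumes nz: "\<And>\<theta>. Re \<theta> \<le> 0 \<Longrightarrow> Lap M \<theta> \<noteq> 0"
  shows "\<exists>c>0. \<forall>\<theta>. Re \<theta> \<le> 0 \<longrightarrow> c \<le> cmod (Lap M \<theta>)"
proof -
  obtain p g where p: "0 < p" and intg: "integrable lborel g"
    and D1: "\<And>\<theta>. Re \<theta> \<le> 0 \<Longrightarrow> Lap M \<theta> - complex_of_real p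
        = (CLINT x|M. complex_of_real (indicator {0<..} x) * exp (\<theta> * complex_of_real x))"
    and D2: "\<And>\<theta>. Re \<theta> \<le> 0 \<Longrightarrow> Lap M \<theta> - complex_of_real p = EL g \<theta>"
    using decomp by blast
  have "p / 2 > 0" using p by simp
  from RL[OF intg, unfolded RLP_def, rule_format, OF this] obtain T where
    T: "\<And>\<theta>. Re \<theta> \<le> 0 \<Longrightarrow> T \<le> \<bar>Im \<theta>\<bar> \<Longrightarrow> cmod (EL g \<theta>) \<le> p / 2" by blast
  have lim: "(\<lambda>n. \<integral>x. indicator {0<..} x * exp (- x) ^ n \<partial>M) \<longlonglongrightarrow> (\<integral>x. 0 \<partial>M)"
  proof (rule integral_dominated_convergence[where w="\<lambda>_. 1"])
    show "AE x in M. (\<lambda>n. indicator {0<..} x * exp (- x) ^ n) \<longlonglongrightarrow> 0"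
    proof (rule AE_I2)
      fix x :: real
      show "(\<lambda>n. indicator {0<..} x * exp (- x) ^ n) \<longlonglongrightarrow> 0"
      proof (cases "0 < x")
        case True
        then have "exp (- x) < 1" by simp
        then have "(\<lambda>n. exp (- x) ^ n) \<longlonglongrightarrow> 0" by (intro LIMSEQ_power_zero) auto
        then show ?thesis using True by simp
      qed simp
    qed
    show "AE x in M. norm (indicator {0<..} x * exp (- x) ^ n) \<le> 1" for n
    proof (rule AE_I2)
      fix x :: real
      show "norm (indicator {0<..} x * exp (- x) ^ n) \<le> 1"
      proof (cases "0 < x")
        case True
        then have "exp (- x) \<le> 1" by simp
        then have "exp (- x) ^ n \<le> 1" by (intro power_le_one) auto
        then show ?thesis using True by simp
      qed simp
    qed
  qed auto
  then obtain N where N: "(\<integral>x. indicator {0<..} x * exp (- x) ^ N \<partial>M) < p / 2"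
    using order_tendstoD(2)[OF lim, of "p/2"] p by (auto simp: eventually_sequentially)
  have farleft: "cmod (Lap M \<theta> - complex_of_real p) \<le> p / 2" if th: "Re \<theta> \<le> - real N" for \<theta>
  proof -
    have th0: "Re \<theta> \<le> 0" using th by (smt (verit) of_nat_0_le_iff)
    have bnd: "AE x in M. cmod (complex_of_real (indicator {0<..} x) * exp (\<theta> * complex_of_real x))
        \<le> indicator {0<..} x * exp (- x) ^ N"
      using nonneg
    proof eventually_elim
      case (elim x)
      show ?case
      proof (cases "0 < x")
        case True
        have "Re \<theta> * x \<le> - real N * x" using th True by (intro mult_right_mono) auto
        then have "exp (Re \<theta> * x) \<le> exp (- x) ^ N"
          by (simp add: exp_of_nat_mult[symmetric])
        then show ?thesis using True by (simp add: norm_mult norm_exp_eq_Re)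
      qed (simp add: indicator_def)
    qed
    have int2: "integrable M (\<lambda>x. complex_of_real (indicator {0<..} x) * exp (\<theta> * complex_of_real x))"
    proof (rule integrable_const_bound[where B=1])
      show "AE x in M. norm (complex_of_real (indicator {0<..} x) * exp (\<theta> * complex_of_real x)) \<le> 1"
        using Lap_bound_AE[OF nonneg th0] by eventually_elim (auto simp: indicator_def norm_mult)
    qed auto
    have int3: "integrable M (\<lambda>x. indicator {0<..} x * exp (- x) ^ N)"
    proof (rule integrable_const_bound[where B=1])
      show "AE x in M. norm (indicator {0<..} x * exp (- x) ^ N) \<le> 1"
      proof (rule AE_I2)
        fix x :: real
        show "norm (indicator {0<..} x * exp (- x) ^ N) \<le> 1"
        proof (cases "0 < x")
          case True
          then have "exp (- x) \<le> 1" by simp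
          then have "exp (- x) ^ N \<le> 1" by (intro power_le_one) auto
          then show ?thesis using True by simp
        qed simp
      qed
    qed auto
    have "cmod (Lap M \<theta> - complex_of_real p)
        \<le> (\<integral>x. cmod (complex_of_real (indicator {0<..} x) * exp (\<theta> * complex_of_real x)) \<partial>M)"
      unfolding D1[OF th0] by (rule integral_norm_bound)
    also have "\<dots> \<le> (\<integral>x. indicator {0<..} x * exp (- x) ^ N \<partial>M)"
      using int2 int3 bnd by (intro integral_mono_AE) auto
    finally show ?thesis using N by simp
  qed
  define K where "K = {\<theta>. - real N \<le> Re \<theta> \<and> Re \<theta> \<le> 0 \<and> \<bar>Im \<theta>\<bar> \<le> \<bar>T\<bar>}"
  have "closed K"
  proof -
    have "K = {\<theta>. - real N \<le> Re \<theta>} \<inter> {\<theta>. Re \<theta> \<le> 0} \<inter> {\<theta>. \<bar>Im \<theta>\<bar> \<le> \<bar>T\<bar>}"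
      unfolding K_def by auto
    moreover have "closed {\<theta>. - real N \<le> Re \<theta>}" "closed {\<theta>. Re \<theta> \<le> 0}" "closed {\<theta>. \<bar>Im \<theta>\<bar> \<le> \<bar>T\<bar>}"
      by (intro closed_Collect_le continuous_intros)+
    ultimately show ?thesis by auto
  qed
  moreover have "bounded K"
    unfolding bounded_iff
  proof (intro exI ballI)
    fix \<theta> assume "\<theta> \<in> K"
    then have "\<bar>Re \<theta>\<bar> \<le> real N" "\<bar>Im \<theta>\<bar> \<le> \<bar>T\<bar>" unfolding K_def by auto
    then show "cmod \<theta> \<le> real N + \<bar>T\<bar>" using cmod_le[of \<theta>] by linarith
  qed
  ultimately have "compact K" by (simp add: compact_eq_bounded_closed)
  moreover have "0 \<in> K" unfolding K_def by simp
  moreover have "continuous_on K (\<lambda>\<theta>. cmod (Lap M \<theta>))"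
    by (intro continuous_on_norm continuous_on_subset[OF Lap_cont[OF nonneg]]) (auto simp: K_def)
  ultimately obtain \<theta>m where \<theta>m: "\<theta>m \<in> K" "\<And>\<theta>. \<theta> \<in> K \<Longrightarrow> cmod (Lap M \<theta>m) \<le> cmod (Lap M \<theta>)"
    using continuous_attains_inf[of K "\<lambda>\<theta>. cmod (Lap M \<theta>)"] by blast
  define m where "m = cmod (Lap M \<theta>m)"
  have "m > 0" using nz[of \<theta>m] \<theta>m(1) unfolding m_def K_def by auto
  show ?thesis
  proof (intro exI[of _ "min m (p/2)"] conjI allI impI)
    show "0 < min m (p / 2)" using \<open>m > 0\<close> p by simp
    fix \<theta> assume th: "Re \<theta> \<le> 0"
    have tri: "p - cmod (Lap M \<theta> - complex_of_real p) \<le> cmod (Lap M \<theta>)"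
      using norm_triangle_ineq2[of "complex_of_real p" "complex_of_real p - Lap M \<theta>"] p
      by (simp add: norm_minus_commute)
    show "min m (p / 2) \<le> cmod (Lap M \<theta>)"
    proof (cases "\<theta> \<in> K")
      case True
      then show ?thesis using \<theta>m(2)[OF True] unfolding m_def by simp
    next
      case False
      then have "Re \<theta> < - real N \<or> \<bar>T\<bar> < \<bar>Im \<theta>\<bar>" using th unfolding K_def by auto
      then have "cmod (Lap M \<theta> - complex_of_real p) \<le> p / 2"
      proof
        assume "Re \<theta> < - real N" then show ?thesis using farleft by simp
      next
        assume "\<bar>T\<bar> < \<bar>Im \<theta>\<bar>" then show ?thesis using T[OF th] D2[OF th] by simp
      qed
      then show ?thesis using tri by simp
    qed
  qed
qed

end
end

definition good_law :: "real measure \<Rightarrow> bool" where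
  "good_law \<mu> \<longleftrightarrow> real_distribution \<mu> \<and> (AE x in \<mu>. 0 \<le> x) \<and> atom0_density_law \<mu>
     \<and> (\<forall>\<theta>. Re \<theta> \<le> 0 \<longrightarrow> Lap \<mu> \<theta> \<noteq> 0)"

lemma good_lawD:
  assumes "good_law \<mu>"
  shows "real_distribution \<mu>" "continuous_on {\<theta>. Re \<theta> \<le> 0} (Lap \<mu>)"
    "Lap \<mu> holomorphic_on {\<theta>. Re \<theta> < 0}" "\<And>\<theta>. Re \<theta> \<le> 0 \<Longrightarrow> cmod (Lap \<mu> \<theta>) \<le> 1"
    "\<exists>c>0. \<forall>\<theta>. Re \<theta> \<le> 0 \<longrightarrow> c \<le> cmod (Lap \<mu> \<theta>)"
    "\<And>\<theta>. Re \<theta> \<le> 0 \<Longrightarrow> Lap \<mu> \<theta> \<noteq> 0"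
    "\<And>t. char \<mu> t = Lap \<mu> (\<i> * complex_of_real t)"
proof -
  have rd: "real_distribution \<mu>" and nn: "AE x in \<mu>. 0 \<le> x" and at: "atom0_density_law \<mu>"
    and nz: "\<And>\<theta>. Re \<theta> \<le> 0 \<Longrightarrow> Lap \<mu> \<theta> \<noteq> 0"
    using assms unfolding good_law_def by auto
  interpret real_distribution \<mu> by (rule rd)
  show "real_distribution \<mu>" by (rule rd)
  show "continuous_on {\<theta>. Re \<theta> \<le> 0} (Lap \<mu>)" by (rule Lap_cont[OF nn])
  show "Lap \<mu> holomorphic_on {\<theta>. Re \<theta> < 0}" by (rule Lap_holo[OF nn])
  show "\<And>\<theta>. Re \<theta> \<le> 0 \<Longrightarrow> cmod (Lap \<mu> \<theta>) \<le> 1" by (rule Lap_norm_le1[OF nn])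
  show "\<exists>c>0. \<forall>\<theta>. Re \<theta> \<le> 0 \<longrightarrow> c \<le> cmod (Lap \<mu> \<theta>)" by (rule Lap_lower_bound[OF nn at nz])
  show "\<And>\<theta>. Re \<theta> \<le> 0 \<Longrightarrow> Lap \<mu> \<theta> \<noteq> 0" by (rule nz)
  show "char \<mu> t = Lap \<mu> (\<i> * complex_of_real t)" for t
    unfolding char_def Lap_def by (simp add: mult.assoc)
qed

lemma glue:
  assumes g1: "good_law \<mu>1" and g2: "good_law \<mu>2" and g1': "good_law \<nu>1" and g2': "good_law \<nu>2"
    and rel: "\<And>t. char \<mu>1 t * char \<mu>2 (- t) = char \<nu>1 t * char \<nu>2 (- t)"
  shows "\<mu>1 = \<nu>1 \<and> \<mu>2 = \<nu>2"
proof -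
  note A = good_lawD[OF g1] and B = good_lawD[OF g2] and C = good_lawD[OF g1'] and D = good_lawD[OF g2']
  obtain c1 where c1: "c1 > 0" "\<And>\<theta>. Re \<theta> \<le> 0 \<Longrightarrow> c1 \<le> cmod (Lap \<nu>1 \<theta>)" using C(5) by blast
  obtain c2 where c2: "c2 > 0" "\<And>\<theta>. Re \<theta> \<le> 0 \<Longrightarrow> c2 \<le> cmod (Lap \<mu>2 \<theta>)" using B(5) by blast
  define G where "G \<theta> = (if Re \<theta> \<le> 0 then Lap \<mu>1 \<theta> / Lap \<nu>1 \<theta> else Lap \<nu>2 (- \<theta>) / Lap \<mu>2 (- \<theta>))" for \<theta>
  have axis: "Lap \<mu>1 \<theta> / Lap \<nu>1 \<theta> = Lap \<nu>2 (- \<theta>) / Lap \<mu>2 (- \<theta>)" if "Re \<theta> = 0" for \<theta>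
  proof -
    have th: "\<theta> = \<i> * complex_of_real (Im \<theta>)" using that by (simp add: complex_eq_iff)
    have "Lap \<mu>1 \<theta> * Lap \<mu>2 (- \<theta>) = Lap \<nu>1 \<theta> * Lap \<nu>2 (- \<theta>)"
      using rel[of "Im \<theta>"] A(7) B(7) C(7) D(7) th by (metis mult_minus_right of_real_minus)
    moreover have "Lap \<nu>1 \<theta> \<noteq> 0" "Lap \<mu>2 (- \<theta>) \<noteq> 0" using C(6) B(6) that by auto
    ultimately show ?thesis by (simp add: field_simps)
  qed
  have cont: "continuous_on UNIV G"
    unfolding G_def
  proof (rule continuous_on_cases_le)
    show "continuous_on {x \<in> UNIV. Re x \<le> 0} (\<lambda>\<theta>. Lap \<mu>1 \<theta> / Lap \<nu>1 \<theta>)"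
      using A(2) C(2) C(6) by (intro continuous_on_divide) auto
    have "continuous_on {x \<in> UNIV. 0 \<le> Re x} (\<lambda>\<theta>. Lap \<nu>2 (- \<theta>))"
      by (rule continuous_on_compose2[OF D(2)]) (auto intro!: continuous_intros)
    moreover have "continuous_on {x \<in> UNIV. 0 \<le> Re x} (\<lambda>\<theta>. Lap \<mu>2 (- \<theta>))"
      by (rule continuous_on_compose2[OF B(2)]) (auto intro!: continuous_intros)
    ultimately show "continuous_on {x \<in> UNIV. 0 \<le> Re x} (\<lambda>\<theta>. Lap \<nu>2 (- \<theta>) / Lap \<mu>2 (- \<theta>))"
      using B(6) by (intro continuous_on_divide) auto
    show "continuous_on UNIV Re" by (intro continuous_intros)
    show "\<And>x. x \<in> UNIV \<Longrightarrow> Re x = 0 \<Longrightarrow> Lap \<mu>1 x / Lap \<nu>1 x = Lap \<nu>2 (- x) / Lap \<mu>2 (- x)"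
      using axis by auto
  qed
  have hol1: "G holomorphic_on (UNIV \<inter> {z. 1 \<bullet> z < 0})"
  proof (rule holomorphic_transform[where f="\<lambda>\<theta>. Lap \<mu>1 \<theta> / Lap \<nu>1 \<theta>"])
    have "(\<lambda>\<theta>. Lap \<mu>1 \<theta> / Lap \<nu>1 \<theta>) holomorphic_on {\<theta>. Re \<theta> < 0}"
      using A(3) C(3) C(6) by (intro holomorphic_on_divide) auto
    then show "(\<lambda>\<theta>. Lap \<mu>1 \<theta> / Lap \<nu>1 \<theta>) holomorphic_on (UNIV \<inter> {z. 1 \<bullet> z < 0})"
      by (simp add: inner_complex_def)
    show "\<And>x. x \<in> UNIV \<inter> {z. 1 \<bullet> z < 0} \<Longrightarrow> Lap \<mu>1 x / Lap \<nu>1 x = G x"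
      by (auto simp: G_def inner_complex_def)
  qed
  have hol2: "G holomorphic_on (UNIV \<inter> {z. 0 < 1 \<bullet> z})"
  proof (rule holomorphic_transform[where f="\<lambda>\<theta>. Lap \<nu>2 (- \<theta>) / Lap \<mu>2 (- \<theta>)"])
    have "uminus ` {\<theta>. 0 < Re \<theta>} \<subseteq> {\<theta>. Re \<theta> < 0}" by auto
    then have "(Lap \<nu>2 \<circ> uminus) holomorphic_on {\<theta>. 0 < Re \<theta>}" "(Lap \<mu>2 \<circ> uminus) holomorphic_on {\<theta>. 0 < Re \<theta>}"
      by (intro holomorphic_on_compose_gen[OF _ D(3)] holomorphic_on_compose_gen[OF _ B(3)] holomorphic_intros; simp)+
    then have "(\<lambda>\<theta>. Lap \<nu>2 (- \<theta>) / Lap \<mu>2 (- \<theta>)) holomorphic_on {\<theta>. 0 < Re \<theta>}"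
      using B(6) by (intro holomorphic_on_divide) (auto simp: o_def)
    then show "(\<lambda>\<theta>. Lap \<nu>2 (- \<theta>) / Lap \<mu>2 (- \<theta>)) holomorphic_on (UNIV \<inter> {z. 0 < 1 \<bullet> z})"
      by (simp add: inner_complex_def)
    show "\<And>x. x \<in> UNIV \<inter> {z. 0 < 1 \<bullet> z} \<Longrightarrow> Lap \<nu>2 (- x) / Lap \<mu>2 (- x) = G x"
      by (auto simp: G_def inner_complex_def)
  qed
  have hol: "G holomorphic_on UNIV"
    by (rule holomorphic_on_paste_across_line[OF open_UNIV _ hol1 hol2 cont]) simp
  have bnd: "cmod (G \<theta>) \<le> 1 / c1 + 1 / c2" for \<theta>
  proof (cases "Re \<theta> \<le> 0")
    case True
    have "cmod (G \<theta>) = cmod (Lap \<mu>1 \<theta>) / cmod (Lap \<nu>1 \<theta>)" using True by (simp add: G_def norm_divide)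
    also have "\<dots> \<le> 1 / c1"
      using A(4)[OF True] c1(2)[OF True] c1(1) by (intro frac_le) auto
    finally show ?thesis using c2(1) by (smt (verit) divide_pos_pos)
  next
    case False
    then have F: "Re (- \<theta>) \<le> 0" by simp
    have "cmod (G \<theta>) = cmod (Lap \<nu>2 (- \<theta>)) / cmod (Lap \<mu>2 (- \<theta>))" using False by (simp add: G_def norm_divide)
    also have "\<dots> \<le> 1 / c2"
      using D(4)[OF F] c2(2)[OF F] c2(1) by (intro frac_le) auto
    finally show ?thesis using c1(1) by (smt (verit) divide_pos_pos)
  qed
  have "bounded (range G)"
    unfolding bounded_iff using bnd by blast
  from Liouville_theorem[OF hol this] have "G \<theta> = G 0" for \<theta>
    unfolding constant_on_def by (metis UNIV_I)
  moreover have "G 0 = 1"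
    using good_lawD(7)[OF g1, of 0] good_lawD(7)[OF g1', of 0]
      real_distribution.char_zero[OF A(1)] real_distribution.char_zero[OF C(1)]
    by (simp add: G_def)
  ultimately have G1: "G \<theta> = 1" for \<theta> by simp
  have e1: "Lap \<mu>1 \<theta> = Lap \<nu>1 \<theta>" if "Re \<theta> = 0" for \<theta>
    using G1[of \<theta>] that C(6)[of \<theta>] by (simp add: G_def divide_eq_1_iff)
  have e2: "Lap \<nu>2 (- \<theta>) = Lap \<mu>2 (- \<theta>)" if "Re \<theta> = 0" for \<theta>
    using G1[of \<theta>] that axis[OF that] B(6)[of "- \<theta>"] by (simp add: G_def divide_eq_1_iff)
  have "char \<mu>1 = char \<nu>1"
  proof
    fix t show "char \<mu>1 t = char \<nu>1 t" using A(7) C(7) e1[of "\<i> * complex_of_real t"] by simp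
  qed
  moreover have "char \<mu>2 = char \<nu>2"
  proof
    fix t show "char \<mu>2 t = char \<nu>2 t"
      using B(7) D(7) e2[of "- (\<i> * complex_of_real t)"] by simp
  qed
  ultimately show ?thesis
    using Levy_uniqueness[OF A(1) C(1)] Levy_uniqueness[OF B(1) D(1)] by simp
qed


lemma good_rv_law:
  assumes "prob_space M" "good_rv M Z"
  shows "good_law (distr M borel Z)"
proof -
  interpret prob_space M by (rule assms(1))
  have Zm [measurable]: "Z \<in> borel_measurable M" and nn: "AE x in M. 0 \<le> Z x"
    and at: "atom0_density_law (distr M borel Z)"
    and nz: "\<And>\<theta>. Re \<theta> \<le> 0 \<Longrightarrow> transform M Z \<theta> \<noteq> 0"
    using assms(2) unfolding good_rv_def by auto
  have "real_distribution (distr M borel Z)" by (rule real_distribution_distr) simp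
  moreover have "AE x in distr M borel Z. 0 \<le> x"
    using nn by (subst AE_distr_iff) auto
  moreover have "Lap (distr M borel Z) \<theta> = transform M Z \<theta>" for \<theta>
    unfolding Lap_def transform_def by (subst integral_distr) auto
  ultimately show ?thesis using at nz unfolding good_law_def by auto
qed

lemma char_diff:
  assumes "prob_space M" "prob_space.indep_var M borel Z1 borel Z2"
  shows "char (distr M borel (\<lambda>x. Z1 x - Z2 x)) t = char (distr M borel Z1) t * char (distr M borel Z2) (- t)"
proof -
  interpret prob_space M by (rule assms(1))
  have [measurable]: "Z1 \<in> borel_measurable M" "Z2 \<in> borel_measurable M"
    using indep_var_rv1[OF assms(2)] indep_var_rv2[OF assms(2)] by auto
  have "indep_var borel (id \<circ> Z1) borel (uminus \<circ> Z2)"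
    by (rule indep_var_compose[OF assms(2)]) auto
  then have ind: "indep_var borel Z1 borel (\<lambda>x. - Z2 x)" by (simp add: o_def)
  have "char (distr M borel (\<lambda>x. Z1 x - Z2 x)) t = char (distr M borel (\<lambda>x. Z1 x + - Z2 x)) t"
    by simp
  also have "\<dots> = char (distr M borel Z1) t * char (distr M borel (\<lambda>x. - Z2 x)) t"
    by (rule char_distr_add[OF ind])
  also have "char (distr M borel (\<lambda>x. - Z2 x)) t = char (distr M borel Z2) (- t)"
    unfolding char_def by (simp add: integral_distr)
  finally show ?thesis .
qed

theorem lemma5p1:
  fixes M :: "'a measure" and M' :: "'b measure"
    and Z1 Z2 :: "'a \<Rightarrow> real" and Z1' Z2' :: "'b \<Rightarrow> real"
  assumes "prob_space M" and "prob_space M'"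
    and "good_rv M Z1" and "good_rv M Z2"
    and "good_rv M' Z1'" and "good_rv M' Z2'"
    and "prob_space.indep_var M borel Z1 borel Z2"
    and "prob_space.indep_var M' borel Z1' borel Z2'"
    and "distr M borel (\<lambda>x. Z1 x - Z2 x) = distr M' borel (\<lambda>x. Z1' x - Z2' x)"
  shows "distr M borel Z1 = distr M' borel Z1' \<and> distr M borel Z2 = distr M' borel Z2'"
proof (rule glue)
  show "good_law (distr M borel Z1)" "good_law (distr M borel Z2)"
    "good_law (distr M' borel Z1')" "good_law (distr M' borel Z2')"
    using good_rv_law assms(1-6) by auto
  fix t
  show "char (distr M borel Z1) t * char (distr M borel Z2) (- t) =
        char (distr M' borel Z1') t * char (distr M' borel Z2') (- t)"
    using char_diff[OF assms(1,7), of t] char_diff[OF assms(2,8), of t] assms(9) by simp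
qed

end
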